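(* Let $Z$ be an abelian group, $K$ a group, and $\theta:K\times K\to Z$ a loop cocycle such that $K\ltimes_\theta Z$ is a commutative A-loop. Let $\mu:K\times K\to Z$ be a group cocycle with $\mu(x,y)=\mu(y,x)$ for all $x,y\in K$. Then $K\ltimes_{\mu\theta}Z$ (where $(\mu\theta)(x,y)=\mu(x,y)\theta(x,y)$) is a commutative A-loop, and its left inner mappings $w\mapsto (uv)\backslash(u(vw))$ coincide with those of $K\ltimes_\theta Z$.
   Context: A loop cocycle is a map $\theta:K\times K\to Z$ with $\theta(x,1)=\theta(1,x)=1$ for all $x\in K$; a group cocycle additionally satisfies $\theta(x,y)\theta(xy,z)=\theta(y,z)\theta(x,yz)$. $K\ltimes_\theta Z$ is the loop on $K\times Z$ with $(x,a)(y,b)=(xy,\,ab\,\theta(x,y))$. An A-loop is a loop all of whose inner mappings (elements of the group generated by $L_{x,y}=L_{yx}^{-1}L_yL_x$, $R_{x,y}=R_{xy}^{-1}R_yR_x$, $T_x=L_x^{-1}R_x$) are automorphisms. *)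

theory Defs
  imports "HOL-Algebra.Group"
begin

definition is_loop :: "'a set \<Rightarrow> ('a \<Rightarrow> 'a \<Rightarrow> 'a) \<Rightarrow> 'a \<Rightarrow> bool" where
  "is_loop S m e \<longleftrightarrow> e \<in> S \<and> (\<forall>x\<in>S. \<forall>y\<in>S. m x y \<in> S)
     \<and> (\<forall>x\<in>S. m e x = x \<and> m x e = x)
     \<and> (\<forall>a\<in>S. \<forall>b\<in>S. (\<exists>!x. x \<in> S \<and> m a x = b) \<and> (\<exists>!y. y \<in> S \<and> m y a = b))"

definition ldiv :: "'a set \<Rightarrow> ('a \<Rightarrow> 'a \<Rightarrow> 'a) \<Rightarrow> 'a \<Rightarrow> 'a \<Rightarrow> 'a" where
  "ldiv S m a b = (THE x. x \<in> S \<and> m a x = b)"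

definition rdiv :: "'a set \<Rightarrow> ('a \<Rightarrow> 'a \<Rightarrow> 'a) \<Rightarrow> 'a \<Rightarrow> 'a \<Rightarrow> 'a" where
  "rdiv S m b a = (THE y. y \<in> S \<and> m y a = b)"

text \<open>Inner mappings: L_{x,y} = L_{yx}^{-1} L_y L_x, R_{x,y} = R_{xy}^{-1} R_y R_x,
  T_x = L_x^{-1} R_x, as maps on S (restricted to S).\<close>
definition Lmap :: "'a set \<Rightarrow> ('a \<Rightarrow> 'a \<Rightarrow> 'a) \<Rightarrow> 'a \<Rightarrow> 'a \<Rightarrow> 'a \<Rightarrow> 'a" where
  "Lmap S m x y = (\<lambda>z\<in>S. ldiv S m (m y x) (m y (m x z)))"

definition Rmap :: "'a set \<Rightarrow> ('a \<Rightarrow> 'a \<Rightarrow> 'a) \<Rightarrow> 'a \<Rightarrow> 'a \<Rightarrow> 'a \<Rightarrow> 'a" where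
  "Rmap S m x y = (\<lambda>z\<in>S. rdiv S m (m (m z x) y) (m x y))"

definition Tmap :: "'a set \<Rightarrow> ('a \<Rightarrow> 'a \<Rightarrow> 'a) \<Rightarrow> 'a \<Rightarrow> 'a \<Rightarrow> 'a" where
  "Tmap S m x = (\<lambda>z\<in>S. ldiv S m x (m z x))"

inductive_set inner_maps :: "'a set \<Rightarrow> ('a \<Rightarrow> 'a \<Rightarrow> 'a) \<Rightarrow> ('a \<Rightarrow> 'a) set"
  for S m where
  genL: "x \<in> S \<Longrightarrow> y \<in> S \<Longrightarrow> Lmap S m x y \<in> inner_maps S m"
| genR: "x \<in> S \<Longrightarrow> y \<in> S \<Longrightarrow> Rmap S m x y \<in> inner_maps S m"
| genT: "x \<in> S \<Longrightarrow> Tmap S m x \<in> inner_maps S m"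
| ident: "(\<lambda>z\<in>S. z) \<in> inner_maps S m"
| comp: "f \<in> inner_maps S m \<Longrightarrow> g \<in> inner_maps S m \<Longrightarrow> compose S f g \<in> inner_maps S m"
| inv: "f \<in> inner_maps S m \<Longrightarrow> (\<lambda>z\<in>S. inv_into S f z) \<in> inner_maps S m"

definition is_automorphism :: "'a set \<Rightarrow> ('a \<Rightarrow> 'a \<Rightarrow> 'a) \<Rightarrow> ('a \<Rightarrow> 'a) \<Rightarrow> bool" where
  "is_automorphism S m f \<longleftrightarrow> bij_betw f S S \<and> (\<forall>x\<in>S. \<forall>y\<in>S. f (m x y) = m (f x) (f y))"

definition is_A_loop :: "'a set \<Rightarrow> ('a \<Rightarrow> 'a \<Rightarrow> 'a) \<Rightarrow> 'a \<Rightarrow> bool" where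
  "is_A_loop S m e \<longleftrightarrow> is_loop S m e \<and> (\<forall>f\<in>inner_maps S m. is_automorphism S m f)"

definition is_commutative :: "'a set \<Rightarrow> ('a \<Rightarrow> 'a \<Rightarrow> 'a) \<Rightarrow> bool" where
  "is_commutative S m \<longleftrightarrow> (\<forall>x\<in>S. \<forall>y\<in>S. m x y = m y x)"

definition loop_cocycle :: "('k, 'c) monoid_scheme \<Rightarrow> ('z, 'd) monoid_scheme \<Rightarrow> ('k \<Rightarrow> 'k \<Rightarrow> 'z) \<Rightarrow> bool" where
  "loop_cocycle K Z \<theta> \<longleftrightarrow>
     (\<forall>x\<in>carrier K. \<forall>y\<in>carrier K. \<theta> x y \<in> carrier Z)
   \<and> (\<forall>x\<in>carrier K. \<theta> x \<one>\<^bsub>K\<^esub> = \<one>\<^bsub>Z\<^esub> \<and> \<theta> \<one>\<^bsub>K\<^esub> x = \<one>\<^bsub>Z\<^esub>)"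

definition group_cocycle :: "('k, 'c) monoid_scheme \<Rightarrow> ('z, 'd) monoid_scheme \<Rightarrow> ('k \<Rightarrow> 'k \<Rightarrow> 'z) \<Rightarrow> bool" where
  "group_cocycle K Z \<theta> \<longleftrightarrow> loop_cocycle K Z \<theta> \<and>
     (\<forall>x\<in>carrier K. \<forall>y\<in>carrier K. \<forall>z\<in>carrier K.
        \<theta> x y \<otimes>\<^bsub>Z\<^esub> \<theta> (x \<otimes>\<^bsub>K\<^esub> y) z = \<theta> y z \<otimes>\<^bsub>Z\<^esub> \<theta> x (y \<otimes>\<^bsub>K\<^esub> z))"

definition ext_carrier :: "('k, 'c) monoid_scheme \<Rightarrow> ('z, 'd) monoid_scheme \<Rightarrow> ('k \<times> 'z) set" where
  "ext_carrier K Z = carrier K \<times> carrier Z"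

definition ext_mult :: "('k, 'c) monoid_scheme \<Rightarrow> ('z, 'd) monoid_scheme \<Rightarrow> ('k \<Rightarrow> 'k \<Rightarrow> 'z)
     \<Rightarrow> 'k \<times> 'z \<Rightarrow> 'k \<times> 'z \<Rightarrow> 'k \<times> 'z" where
  "ext_mult K Z \<theta> p q = (fst p \<otimes>\<^bsub>K\<^esub> fst q, (snd p \<otimes>\<^bsub>Z\<^esub> snd q) \<otimes>\<^bsub>Z\<^esub> \<theta> (fst p) (fst q))"

definition ext_one :: "('k, 'c) monoid_scheme \<Rightarrow> ('z, 'd) monoid_scheme \<Rightarrow> 'k \<times> 'z" where
  "ext_one K Z = (\<one>\<^bsub>K\<^esub>, \<one>\<^bsub>Z\<^esub>)"

end

theory Submission
  imports Defs
begin

lemma loop_H1: "is_loop S m e \<Longrightarrow> \<forall>a\<in>S. \<forall>b\<in>S. (\<exists>!x. x \<in> S \<and> m a x = b) \<and> (\<exists>!y. y \<in> S \<and> m y a = b)"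
  unfolding is_loop_def by (elim conjE) assumption
lemma loop_H2: "is_loop S m e \<Longrightarrow> e \<in> S"
  unfolding is_loop_def by (elim conjE) assumption
lemma loop_H3: "is_loop S m e \<Longrightarrow> \<forall>x\<in>S. \<forall>y\<in>S. m x y \<in> S"
  unfolding is_loop_def by (elim conjE) assumption

lemma loop_ex1: "is_loop S m e \<Longrightarrow> a \<in> S \<Longrightarrow> b \<in> S \<Longrightarrow> \<exists>!x. x \<in> S \<and> m a x = b"
  by (rule loop_H1[rule_format, THEN conjunct1])

lemma loop_closed: "is_loop S m e \<Longrightarrow> a \<in> S \<Longrightarrow> b \<in> S \<Longrightarrow> m a b \<in> S"
  by (rule loop_H3[rule_format])

lemma loop_ldiv:
  assumes "is_loop S m e" "a \<in> S" "b \<in> S"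
  shows "ldiv S m a b \<in> S \<and> m a (ldiv S m a b) = b"
  unfolding ldiv_def by (rule theI'[OF loop_ex1[OF assms]])

lemma loop_ldiv_eq:
  assumes "is_loop S m e" "a \<in> S" "x \<in> S" "m a x = b"
  shows "ldiv S m a b = x"
proof -
  have b: "b \<in> S" using loop_closed[OF assms(1-3)] assms(4) by simp
  have "x \<in> S \<and> m a x = b" using assms by simp
  then show ?thesis unfolding ldiv_def by (rule the1_equality[OF loop_ex1[OF assms(1,2) b]])
qed

lemma comm_Rmap:
  assumes "is_loop S m e" "is_commutative S m" "x \<in> S" "y \<in> S"
  shows "Rmap S m x y = Lmap S m x y"
proof -
  have "rdiv S m (m (m z x) y) (m x y) = ldiv S m (m y x) (m y (m x z))" if z: "z \<in> S" for z
  proof -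
    have c: "\<And>a b. a \<in> S \<Longrightarrow> b \<in> S \<Longrightarrow> m a b = m b a"
      using assms(2) unfolding is_commutative_def by blast
    have zx: "m z x \<in> S" using loop_closed[OF assms(1) z assms(3)] .
    have "rdiv S m (m (m z x) y) (m x y) = ldiv S m (m x y) (m (m z x) y)"
      unfolding rdiv_def ldiv_def
      by (rule arg_cong[where f=The]) (use c loop_closed[OF assms(1)] assms in fastforce)
    also have "\<dots> = ldiv S m (m y x) (m y (m x z))"
      using c[OF assms(3,4)] c[OF zx assms(4)] c[OF z assms(3)] by simp
    finally show ?thesis .
  qed
  then show ?thesis unfolding Rmap_def Lmap_def by (intro restrict_ext) simp
qed

lemma comm_Tmap:
  assumes "is_loop S m e" "is_commutative S m" "x \<in> S"
  shows "Tmap S m x = (\<lambda>z\<in>S. z)"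
  unfolding Tmap_def
proof (intro restrict_ext)
  fix z assume z: "z \<in> S"
  have "m z x = m x z" using assms(2) z assms(3) unfolding is_commutative_def by blast
  then show "ldiv S m x (m z x) = z" using loop_ldiv_eq[OF assms(1,3) z] by simp
qed

locale ext_ctx = K: group K + Z: comm_group Z
  for K :: "('k,'c) monoid_scheme" and Z :: "('z,'d) monoid_scheme"
begin

lemma mem_S[simp]: "p \<in> ext_carrier K Z \<longleftrightarrow> fst p \<in> carrier K \<and> snd p \<in> carrier Z"
  by (cases p) (auto simp: ext_carrier_def)

lemma mult_pair[simp]: "ext_mult K Z \<phi> (a,b) (c,d) = (a \<otimes>\<^bsub>K\<^esub> c, (b \<otimes>\<^bsub>Z\<^esub> d) \<otimes>\<^bsub>Z\<^esub> \<phi> a c)"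
  by (simp add: ext_mult_def)

lemma Zsolve1:
  assumes "u \<in> carrier Z" "y \<in> carrier Z" "c \<in> carrier Z" "b \<in> carrier Z"
  shows "(u \<otimes>\<^bsub>Z\<^esub> y) \<otimes>\<^bsub>Z\<^esub> c = b \<longleftrightarrow> y = b \<otimes>\<^bsub>Z\<^esub> inv\<^bsub>Z\<^esub> (u \<otimes>\<^bsub>Z\<^esub> c)"
proof -
  have "(u \<otimes>\<^bsub>Z\<^esub> y) \<otimes>\<^bsub>Z\<^esub> c = y \<otimes>\<^bsub>Z\<^esub> (u \<otimes>\<^bsub>Z\<^esub> c)" using assms by (simp add: Z.m_ac)
  then show ?thesis using Z.inv_solve_right[of y b "u \<otimes>\<^bsub>Z\<^esub> c"] assms by auto
qed

lemma Zsolve2: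
  assumes "u \<in> carrier Z" "y \<in> carrier Z" "c \<in> carrier Z" "b \<in> carrier Z"
  shows "(y \<otimes>\<^bsub>Z\<^esub> u) \<otimes>\<^bsub>Z\<^esub> c = b \<longleftrightarrow> y = b \<otimes>\<^bsub>Z\<^esub> inv\<^bsub>Z\<^esub> (u \<otimes>\<^bsub>Z\<^esub> c)"
  using Zsolve1[OF assms] assms by (simp add: Z.m_comm)

lemma ext_loop:
  assumes "loop_cocycle K Z \<phi>"
  shows "is_loop (ext_carrier K Z) (ext_mult K Z \<phi>) (ext_one K Z)"
proof -
  have phi: "\<And>x y. x \<in> carrier K \<Longrightarrow> y \<in> carrier K \<Longrightarrow> \<phi> x y \<in> carrier Z"
    and phi1: "\<And>x. x \<in> carrier K \<Longrightarrow> \<phi> x \<one>\<^bsub>K\<^esub> = \<one>\<^bsub>Z\<^esub>"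
    and phi2: "\<And>x. x \<in> carrier K \<Longrightarrow> \<phi> \<one>\<^bsub>K\<^esub> x = \<one>\<^bsub>Z\<^esub>"
    using assms unfolding loop_cocycle_def by auto
  let ?S = "ext_carrier K Z" and ?m = "ext_mult K Z \<phi>"
  have L: "\<exists>!x. x \<in> ?S \<and> ?m a x = b" if a: "a \<in> ?S" and b: "b \<in> ?S" for a b
  proof -
    obtain a1 a2 where ap: "a = (a1,a2)" by (cases a)
    obtain b1 b2 where bp: "b = (b1,b2)" by (cases b)
    have A: "a1 \<in> carrier K" "a2 \<in> carrier Z" "b1 \<in> carrier K" "b2 \<in> carrier Z"
      using a b ap bp by auto
    define x1 where "x1 = inv\<^bsub>K\<^esub> a1 \<otimes>\<^bsub>K\<^esub> b1"
    have x1: "x1 \<in> carrier K" using A x1_def by simp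
    have eq1: "\<And>y1. y1 \<in> carrier K \<Longrightarrow> a1 \<otimes>\<^bsub>K\<^esub> y1 = b1 \<longleftrightarrow> y1 = x1"
      unfolding x1_def using K.inv_solve_left A by metis
    show ?thesis
    proof (rule ex1I[where a="(x1, b2 \<otimes>\<^bsub>Z\<^esub> inv\<^bsub>Z\<^esub> (a2 \<otimes>\<^bsub>Z\<^esub> \<phi> a1 x1))"])
      show "(x1, b2 \<otimes>\<^bsub>Z\<^esub> inv\<^bsub>Z\<^esub> (a2 \<otimes>\<^bsub>Z\<^esub> \<phi> a1 x1)) \<in> ?S \<and>
        ?m a (x1, b2 \<otimes>\<^bsub>Z\<^esub> inv\<^bsub>Z\<^esub> (a2 \<otimes>\<^bsub>Z\<^esub> \<phi> a1 x1)) = b"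
        using A x1 eq1[OF x1] Zsolve1[of a2 "b2 \<otimes>\<^bsub>Z\<^esub> inv\<^bsub>Z\<^esub> (a2 \<otimes>\<^bsub>Z\<^esub> \<phi> a1 x1)" "\<phi> a1 x1" b2]
          phi ap bp by simp
    next
      fix y assume y: "y \<in> ?S \<and> ?m a y = b"
      obtain y1 y2 where yp: "y = (y1,y2)" by (cases y)
      have Y: "y1 \<in> carrier K" "y2 \<in> carrier Z" using y yp by auto
      have "y1 = x1" using y yp ap bp eq1[OF Y(1)] by simp
      then show "y = (x1, b2 \<otimes>\<^bsub>Z\<^esub> inv\<^bsub>Z\<^esub> (a2 \<otimes>\<^bsub>Z\<^esub> \<phi> a1 x1))"
        using y yp ap bp Zsolve1[of a2 y2 "\<phi> a1 x1" b2] A Y phi x1 by auto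
    qed
  qed
  have R: "\<exists>!x. x \<in> ?S \<and> ?m x a = b" if a: "a \<in> ?S" and b: "b \<in> ?S" for a b
  proof -
    obtain a1 a2 where ap: "a = (a1,a2)" by (cases a)
    obtain b1 b2 where bp: "b = (b1,b2)" by (cases b)
    have A: "a1 \<in> carrier K" "a2 \<in> carrier Z" "b1 \<in> carrier K" "b2 \<in> carrier Z"
      using a b ap bp by auto
    define x1 where "x1 = b1 \<otimes>\<^bsub>K\<^esub> inv\<^bsub>K\<^esub> a1"
    have x1: "x1 \<in> carrier K" using A x1_def by simp
    have eq1: "\<And>y1. y1 \<in> carrier K \<Longrightarrow> y1 \<otimes>\<^bsub>K\<^esub> a1 = b1 \<longleftrightarrow> y1 = x1"
      unfolding x1_def using K.inv_solve_right A by metis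
    show ?thesis
    proof (rule ex1I[where a="(x1, b2 \<otimes>\<^bsub>Z\<^esub> inv\<^bsub>Z\<^esub> (a2 \<otimes>\<^bsub>Z\<^esub> \<phi> x1 a1))"])
      show "(x1, b2 \<otimes>\<^bsub>Z\<^esub> inv\<^bsub>Z\<^esub> (a2 \<otimes>\<^bsub>Z\<^esub> \<phi> x1 a1)) \<in> ?S \<and>
        ?m (x1, b2 \<otimes>\<^bsub>Z\<^esub> inv\<^bsub>Z\<^esub> (a2 \<otimes>\<^bsub>Z\<^esub> \<phi> x1 a1)) a = b"
        using A x1 eq1[OF x1] Zsolve2[of a2 "b2 \<otimes>\<^bsub>Z\<^esub> inv\<^bsub>Z\<^esub> (a2 \<otimes>\<^bsub>Z\<^esub> \<phi> x1 a1)" "\<phi> x1 a1" b2]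
          phi ap bp by simp
    next
      fix y assume y: "y \<in> ?S \<and> ?m y a = b"
      obtain y1 y2 where yp: "y = (y1,y2)" by (cases y)
      have Y: "y1 \<in> carrier K" "y2 \<in> carrier Z" using y yp by auto
      have "y1 = x1" using y yp ap bp eq1[OF Y(1)] by simp
      then show "y = (x1, b2 \<otimes>\<^bsub>Z\<^esub> inv\<^bsub>Z\<^esub> (a2 \<otimes>\<^bsub>Z\<^esub> \<phi> x1 a1))"
        using y yp ap bp Zsolve2[of a2 y2 "\<phi> x1 a1" b2] A Y phi x1 by auto
    qed
  qed
  have e: "ext_one K Z \<in> ?S" by (simp add: ext_one_def)
  have cl: "\<forall>x\<in>?S. \<forall>y\<in>?S. ?m x y \<in> ?S"
    using phi by (simp add: ext_mult_def)
  have id: "\<forall>x\<in>?S. ?m (ext_one K Z) x = x \<and> ?m x (ext_one K Z) = x"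
    using phi1 phi2 by (simp add: ext_mult_def ext_one_def)
  have LR: "\<forall>a\<in>?S. \<forall>b\<in>?S. (\<exists>!x. x \<in> ?S \<and> ?m a x = b) \<and> (\<exists>!y. y \<in> ?S \<and> ?m y a = b)"
    using L R by simp
  show ?thesis unfolding is_loop_def
    using e cl id LR by (simp only:)
qed


lemma mu_theta_cocycle:
  assumes "loop_cocycle K Z \<theta>" "group_cocycle K Z \<mu>"
  shows "loop_cocycle K Z (\<lambda>x y. \<mu> x y \<otimes>\<^bsub>Z\<^esub> \<theta> x y)"
  using assms unfolding loop_cocycle_def group_cocycle_def by auto

lemma scale_r:
  assumes "a \<in> ext_carrier K Z" "p \<in> ext_carrier K Z" "d \<in> carrier Z"
    "\<And>x y. x \<in> carrier K \<Longrightarrow> y \<in> carrier K \<Longrightarrow> \<phi> x y \<in> carrier Z"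
  shows "ext_mult K Z \<phi> a (fst p, snd p \<otimes>\<^bsub>Z\<^esub> d)
       = (fst (ext_mult K Z \<phi> a p), snd (ext_mult K Z \<phi> a p) \<otimes>\<^bsub>Z\<^esub> d)"
  using assms by (simp add: ext_mult_def Z.m_ac)

lemma L_eq:
  assumes th: "loop_cocycle K Z \<theta>" and mu: "group_cocycle K Z \<mu>"
    and u: "u \<in> ext_carrier K Z" and v: "v \<in> ext_carrier K Z" and w: "w \<in> ext_carrier K Z"
  shows "ldiv (ext_carrier K Z) (ext_mult K Z (\<lambda>x y. \<mu> x y \<otimes>\<^bsub>Z\<^esub> \<theta> x y))
     (ext_mult K Z (\<lambda>x y. \<mu> x y \<otimes>\<^bsub>Z\<^esub> \<theta> x y) u v)
     (ext_mult K Z (\<lambda>x y. \<mu> x y \<otimes>\<^bsub>Z\<^esub> \<theta> x y) u (ext_mult K Z (\<lambda>x y. \<mu> x y \<otimes>\<^bsub>Z\<^esub> \<theta> x y) v w))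
   = ldiv (ext_carrier K Z) (ext_mult K Z \<theta>) (ext_mult K Z \<theta> u v) (ext_mult K Z \<theta> u (ext_mult K Z \<theta> v w))"
proof -
  let ?S = "ext_carrier K Z" and ?m = "ext_mult K Z \<theta>" and ?m' = "ext_mult K Z (\<lambda>x y. \<mu> x y \<otimes>\<^bsub>Z\<^esub> \<theta> x y)"
  have l0: "is_loop ?S ?m (ext_one K Z)" by (rule ext_loop[OF th])
  have l1: "is_loop ?S ?m' (ext_one K Z)" by (rule ext_loop[OF mu_theta_cocycle[OF th mu]])
  have thc: "\<And>x y. x \<in> carrier K \<Longrightarrow> y \<in> carrier K \<Longrightarrow> \<theta> x y \<in> carrier Z"
    using th unfolding loop_cocycle_def by auto
  have muc: "\<And>x y. x \<in> carrier K \<Longrightarrow> y \<in> carrier K \<Longrightarrow> \<mu> x y \<in> carrier Z"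
    using mu unfolding loop_cocycle_def group_cocycle_def by auto
  have coc: "\<And>x y z. x \<in> carrier K \<Longrightarrow> y \<in> carrier K \<Longrightarrow> z \<in> carrier K \<Longrightarrow>
        \<mu> x y \<otimes>\<^bsub>Z\<^esub> \<mu> (x \<otimes>\<^bsub>K\<^esub> y) z = \<mu> y z \<otimes>\<^bsub>Z\<^esub> \<mu> x (y \<otimes>\<^bsub>K\<^esub> z)"
    using mu unfolding group_cocycle_def by auto
  define x where "x = ldiv ?S ?m (?m u v) (?m u (?m v w))"
  have uv: "?m u v \<in> ?S" by (rule loop_closed[OF l0 u v])
  have uvw: "?m u (?m v w) \<in> ?S" by (intro loop_closed[OF l0] u loop_closed[OF l0 v w])
  have xS: "x \<in> ?S" and xe: "?m (?m u v) x = ?m u (?m v w)"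
    using loop_ldiv[OF l0 uv uvw] unfolding x_def by auto
  obtain u1 u2 where up: "u = (u1,u2)" by (cases u)
  obtain v1 v2 where vp: "v = (v1,v2)" by (cases v)
  obtain w1 w2 where wp: "w = (w1,w2)" by (cases w)
  obtain x1 x2 where xp: "x = (x1,x2)" by (cases x)
  have C: "u1 \<in> carrier K" "v1 \<in> carrier K" "w1 \<in> carrier K" "x1 \<in> carrier K"
    "u2 \<in> carrier Z" "v2 \<in> carrier Z" "w2 \<in> carrier Z" "x2 \<in> carrier Z"
    using u v w xS up vp wp xp by auto
  have e1: "(u1 \<otimes>\<^bsub>K\<^esub> v1) \<otimes>\<^bsub>K\<^esub> x1 = u1 \<otimes>\<^bsub>K\<^esub> (v1 \<otimes>\<^bsub>K\<^esub> w1)"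
    and e2: "((u2 \<otimes>\<^bsub>Z\<^esub> v2) \<otimes>\<^bsub>Z\<^esub> \<theta> u1 v1 \<otimes>\<^bsub>Z\<^esub> x2) \<otimes>\<^bsub>Z\<^esub> \<theta> (u1 \<otimes>\<^bsub>K\<^esub> v1) x1
        = (u2 \<otimes>\<^bsub>Z\<^esub> ((v2 \<otimes>\<^bsub>Z\<^esub> w2) \<otimes>\<^bsub>Z\<^esub> \<theta> v1 w1)) \<otimes>\<^bsub>Z\<^esub> \<theta> u1 (v1 \<otimes>\<^bsub>K\<^esub> w1)"
    using xe up vp wp xp by simp_all
  have x1: "x1 = w1" using e1 C by (simp add: K.m_assoc)
  have "?m' (?m' u v) x = ?m' u (?m' v w)"
  proof -
    have "((u2 \<otimes>\<^bsub>Z\<^esub> v2) \<otimes>\<^bsub>Z\<^esub> (\<mu> u1 v1 \<otimes>\<^bsub>Z\<^esub> \<theta> u1 v1) \<otimes>\<^bsub>Z\<^esub> x2) \<otimes>\<^bsub>Z\<^esub> (\<mu> (u1 \<otimes>\<^bsub>K\<^esub> v1) x1 \<otimes>\<^bsub>Z\<^esub> \<theta> (u1 \<otimes>\<^bsub>K\<^esub> v1) x1)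
        = (((u2 \<otimes>\<^bsub>Z\<^esub> v2) \<otimes>\<^bsub>Z\<^esub> \<theta> u1 v1 \<otimes>\<^bsub>Z\<^esub> x2) \<otimes>\<^bsub>Z\<^esub> \<theta> (u1 \<otimes>\<^bsub>K\<^esub> v1) x1) \<otimes>\<^bsub>Z\<^esub> (\<mu> u1 v1 \<otimes>\<^bsub>Z\<^esub> \<mu> (u1 \<otimes>\<^bsub>K\<^esub> v1) w1)"
      using C thc muc x1 by (simp add: Z.m_ac)
    also have "\<dots> = ((u2 \<otimes>\<^bsub>Z\<^esub> ((v2 \<otimes>\<^bsub>Z\<^esub> w2) \<otimes>\<^bsub>Z\<^esub> \<theta> v1 w1)) \<otimes>\<^bsub>Z\<^esub> \<theta> u1 (v1 \<otimes>\<^bsub>K\<^esub> w1)) \<otimes>\<^bsub>Z\<^esub> (\<mu> v1 w1 \<otimes>\<^bsub>Z\<^esub> \<mu> u1 (v1 \<otimes>\<^bsub>K\<^esub> w1))"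
      using e2 coc C by simp
    also have "\<dots> = (u2 \<otimes>\<^bsub>Z\<^esub> ((v2 \<otimes>\<^bsub>Z\<^esub> w2) \<otimes>\<^bsub>Z\<^esub> (\<mu> v1 w1 \<otimes>\<^bsub>Z\<^esub> \<theta> v1 w1))) \<otimes>\<^bsub>Z\<^esub> (\<mu> u1 (v1 \<otimes>\<^bsub>K\<^esub> w1) \<otimes>\<^bsub>Z\<^esub> \<theta> u1 (v1 \<otimes>\<^bsub>K\<^esub> w1))"
      using C thc muc by (simp add: Z.m_ac)
    finally show ?thesis using e1 up vp wp xp by simp
  qed
  then show ?thesis unfolding x_def[symmetric]
    by (intro loop_ldiv_eq[OF l1] loop_closed[OF l1] u v xS)
qed


lemma comm_facts:
  assumes "is_commutative (ext_carrier K Z) (ext_mult K Z \<theta>)"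
    and "x \<in> carrier K" "y \<in> carrier K" and th: "loop_cocycle K Z \<theta>"
  shows "x \<otimes>\<^bsub>K\<^esub> y = y \<otimes>\<^bsub>K\<^esub> x \<and> \<theta> x y = \<theta> y x"
proof -
  have "ext_mult K Z \<theta> (x, \<one>\<^bsub>Z\<^esub>) (y, \<one>\<^bsub>Z\<^esub>) = ext_mult K Z \<theta> (y, \<one>\<^bsub>Z\<^esub>) (x, \<one>\<^bsub>Z\<^esub>)"
    using assms(1,2,3) unfolding is_commutative_def by (simp del: mult_pair)
  then show ?thesis using th assms(2,3) unfolding loop_cocycle_def by simp
qed

lemma comm_new:
  assumes "is_commutative (ext_carrier K Z) (ext_mult K Z \<theta>)"
    and "\<forall>x\<in>carrier K. \<forall>y\<in>carrier K. \<mu> x y = \<mu> y x" "loop_cocycle K Z \<theta>"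
  shows "is_commutative (ext_carrier K Z) (ext_mult K Z (\<lambda>x y. \<mu> x y \<otimes>\<^bsub>Z\<^esub> \<theta> x y))"
  unfolding is_commutative_def
proof (intro ballI)
  fix p q assume p: "p \<in> ext_carrier K Z" and q: "q \<in> ext_carrier K Z"
  have c: "fst p \<otimes>\<^bsub>K\<^esub> fst q = fst q \<otimes>\<^bsub>K\<^esub> fst p \<and> \<theta> (fst p) (fst q) = \<theta> (fst q) (fst p)"
    using comm_facts[OF assms(1) _ _ assms(3)] p q by simp
  show "ext_mult K Z (\<lambda>x y. \<mu> x y \<otimes>\<^bsub>Z\<^esub> \<theta> x y) p q = ext_mult K Z (\<lambda>x y. \<mu> x y \<otimes>\<^bsub>Z\<^esub> \<theta> x y) q p"
    using c assms(2) p q by (simp add: ext_mult_def Z.m_comm)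
qed


definition Pform :: "(('k \<times> 'z) \<Rightarrow> ('k \<times> 'z)) \<Rightarrow> bool" where
  "Pform f \<longleftrightarrow> (\<forall>p\<in>ext_carrier K Z. f p \<in> ext_carrier K Z \<and> fst (f p) = fst p)
     \<and> (\<forall>p\<in>ext_carrier K Z. \<forall>d\<in>carrier Z. f (fst p, snd p \<otimes>\<^bsub>Z\<^esub> d) = (fst p, snd (f p) \<otimes>\<^bsub>Z\<^esub> d))"

lemma Lmap_P:
  assumes th: "loop_cocycle K Z \<theta>" and x: "x \<in> ext_carrier K Z" and y: "y \<in> ext_carrier K Z"
  shows "Pform (Lmap (ext_carrier K Z) (ext_mult K Z \<theta>) x y)"
proof -
  let ?S = "ext_carrier K Z" and ?m = "ext_mult K Z \<theta>"
  have l0: "is_loop ?S ?m (ext_one K Z)" by (rule ext_loop[OF th])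
  have thc: "\<And>x y. x \<in> carrier K \<Longrightarrow> y \<in> carrier K \<Longrightarrow> \<theta> x y \<in> carrier Z"
    using th unfolding loop_cocycle_def by auto
  have a: "?m y x \<in> ?S" by (rule loop_closed[OF l0 y x])
  have main: "ldiv ?S ?m (?m y x) (?m y (?m x p)) \<in> ?S \<and>
      fst (ldiv ?S ?m (?m y x) (?m y (?m x p))) = fst p \<and>
      (\<forall>d\<in>carrier Z. ldiv ?S ?m (?m y x) (?m y (?m x (fst p, snd p \<otimes>\<^bsub>Z\<^esub> d)))
         = (fst p, snd (ldiv ?S ?m (?m y x) (?m y (?m x p))) \<otimes>\<^bsub>Z\<^esub> d))"
    if p: "p \<in> ?S" for p
  proof -
    define b where "b = ?m y (?m x p)"
    have b: "b \<in> ?S" unfolding b_def by (intro loop_closed[OF l0] y loop_closed[OF l0 x p])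
    define q where "q = ldiv ?S ?m (?m y x) b"
    have qS: "q \<in> ?S" and qe: "?m (?m y x) q = b"
      using loop_ldiv[OF l0 a b] unfolding q_def by auto
    have "fst (?m (?m y x) q) = fst (?m (?m y x) p)"
      using qe x y p unfolding b_def by (simp add: ext_mult_def K.m_assoc)
    then have fq: "fst q = fst p" using x y p qS by (simp add: ext_mult_def)
    have sc: "ldiv ?S ?m (?m y x) (?m y (?m x (fst p, snd p \<otimes>\<^bsub>Z\<^esub> d))) = (fst p, snd q \<otimes>\<^bsub>Z\<^esub> d)"
      if d: "d \<in> carrier Z" for d
    proof -
      have mx: "?m x p \<in> ?S" by (rule loop_closed[OF l0 x p])
      have "?m y (?m x (fst p, snd p \<otimes>\<^bsub>Z\<^esub> d)) = (fst b, snd b \<otimes>\<^bsub>Z\<^esub> d)"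
        unfolding b_def using scale_r[OF x p d thc] scale_r[OF y mx d thc] by simp
      moreover have "?m (?m y x) (fst q, snd q \<otimes>\<^bsub>Z\<^esub> d) = (fst b, snd b \<otimes>\<^bsub>Z\<^esub> d)"
        using scale_r[OF a qS d thc] qe by simp
      moreover have "(fst q, snd q \<otimes>\<^bsub>Z\<^esub> d) \<in> ?S" using qS d by simp
      ultimately show ?thesis using loop_ldiv_eq[OF l0 a] fq by metis
    qed
    show ?thesis using qS fq sc unfolding q_def b_def by simp
  qed
  show ?thesis unfolding Pform_def Lmap_def using main by simp
qed

lemma P_inner:
  assumes th: "loop_cocycle K Z \<theta>"
    and A: "is_A_loop (ext_carrier K Z) (ext_mult K Z \<theta>) (ext_one K Z)"
    and C: "is_commutative (ext_carrier K Z) (ext_mult K Z \<theta>)"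
    and f: "f \<in> inner_maps (ext_carrier K Z) (ext_mult K Z \<theta>)"
  shows "Pform f"
  using f
proof (induction rule: inner_maps.induct)
  case (genL x y)
  then show ?case using Lmap_P[OF th] by simp
next
  case (genR x y)
  have l0: "is_loop (ext_carrier K Z) (ext_mult K Z \<theta>) (ext_one K Z)" by (rule ext_loop[OF th])
  show ?case using comm_Rmap[OF l0 C genR] Lmap_P[OF th genR] by simp
next
  case (genT x)
  have l0: "is_loop (ext_carrier K Z) (ext_mult K Z \<theta>) (ext_one K Z)" by (rule ext_loop[OF th])
  show ?case using comm_Tmap[OF l0 C genT] by (simp add: Pform_def)
next
  case ident
  then show ?case by (simp add: Pform_def)
next
  case (comp f g)
  have Pf1: "\<And>p. p \<in> ext_carrier K Z \<Longrightarrow> f p \<in> ext_carrier K Z \<and> fst (f p) = fst p"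
    and Pf2: "\<And>p d. p \<in> ext_carrier K Z \<Longrightarrow> d \<in> carrier Z \<Longrightarrow> f (fst p, snd p \<otimes>\<^bsub>Z\<^esub> d) = (fst p, snd (f p) \<otimes>\<^bsub>Z\<^esub> d)"
    using comp.IH(1) unfolding Pform_def by (simp_all only: Ball_def)
  have Pg1: "\<And>p. p \<in> ext_carrier K Z \<Longrightarrow> g p \<in> ext_carrier K Z \<and> fst (g p) = fst p"
    and Pg2: "\<And>p d. p \<in> ext_carrier K Z \<Longrightarrow> d \<in> carrier Z \<Longrightarrow> g (fst p, snd p \<otimes>\<^bsub>Z\<^esub> d) = (fst p, snd (g p) \<otimes>\<^bsub>Z\<^esub> d)"
    using comp.IH(2) unfolding Pform_def by (simp_all only: Ball_def)
  show ?case unfolding Pform_def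
  proof (rule conjI; intro ballI)
    fix p assume p: "p \<in> ext_carrier K Z"
    show "compose (ext_carrier K Z) f g p \<in> ext_carrier K Z \<and> fst (compose (ext_carrier K Z) f g p) = fst p"
      using Pg1[OF p] Pf1[of "g p"] p unfolding compose_def by simp
  next
    fix p d assume p: "p \<in> ext_carrier K Z" and d: "d \<in> carrier Z"
    have g1: "g p \<in> ext_carrier K Z" "fst (g p) = fst p" using Pg1[OF p] by auto
    have pd: "(fst p, snd p \<otimes>\<^bsub>Z\<^esub> d) \<in> ext_carrier K Z" using p d by simp
    have "f (g (fst p, snd p \<otimes>\<^bsub>Z\<^esub> d)) = (fst (g p), snd (f (g p)) \<otimes>\<^bsub>Z\<^esub> d)"
      using Pg2[OF p d] Pf2[OF g1(1) d] g1 by simp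
    then show "compose (ext_carrier K Z) f g (fst p, snd p \<otimes>\<^bsub>Z\<^esub> d) =
        (fst p, snd (compose (ext_carrier K Z) f g p) \<otimes>\<^bsub>Z\<^esub> d)"
      using p pd g1 unfolding compose_def by simp
  qed
next
  case (inv f)
  have Pf1: "\<And>p. p \<in> ext_carrier K Z \<Longrightarrow> f p \<in> ext_carrier K Z \<and> fst (f p) = fst p"
    and Pf2: "\<And>p d. p \<in> ext_carrier K Z \<Longrightarrow> d \<in> carrier Z \<Longrightarrow> f (fst p, snd p \<otimes>\<^bsub>Z\<^esub> d) = (fst p, snd (f p) \<otimes>\<^bsub>Z\<^esub> d)"
    using inv.IH unfolding Pform_def by (simp_all only: Ball_def)
  have aut: "\<forall>f\<in>inner_maps (ext_carrier K Z) (ext_mult K Z \<theta>). is_automorphism (ext_carrier K Z) (ext_mult K Z \<theta>) f"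
    using A unfolding is_A_loop_def by (elim conjE)
  have bij: "bij_betw f (ext_carrier K Z) (ext_carrier K Z)"
    using aut[rule_format, OF inv.hyps] unfolding is_automorphism_def by (elim conjE)
  have inj: "inj_on f (ext_carrier K Z)" using bij by (rule bij_betw_imp_inj_on)
  have im: "f ` ext_carrier K Z = ext_carrier K Z" using bij by (rule bij_betw_imp_surj_on)
  have qprops: "inv_into (ext_carrier K Z) f p \<in> ext_carrier K Z \<and> f (inv_into (ext_carrier K Z) f p) = p
      \<and> fst (inv_into (ext_carrier K Z) f p) = fst p" if p: "p \<in> ext_carrier K Z" for p
  proof -
    have pim: "p \<in> f ` ext_carrier K Z" using p im by simp
    have qS: "inv_into (ext_carrier K Z) f p \<in> ext_carrier K Z" by (rule inv_into_into[OF pim])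
    have fq: "f (inv_into (ext_carrier K Z) f p) = p" by (rule f_inv_into_f[OF pim])
    show ?thesis using qS fq Pf1[OF qS] by simp
  qed
  show ?case unfolding Pform_def
  proof (rule conjI; intro ballI)
    fix p assume p: "p \<in> ext_carrier K Z"
    show "(\<lambda>z\<in>ext_carrier K Z. inv_into (ext_carrier K Z) f z) p \<in> ext_carrier K Z \<and>
         fst ((\<lambda>z\<in>ext_carrier K Z. inv_into (ext_carrier K Z) f z) p) = fst p"
      using p qprops[OF p] by simp
  next
    fix p d assume p: "p \<in> ext_carrier K Z" and d: "d \<in> carrier Z"
    define q where "q = inv_into (ext_carrier K Z) f p"
    have qS: "q \<in> ext_carrier K Z" and fq: "f q = p" and fst: "fst q = fst p"
      using qprops[OF p] unfolding q_def by auto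
    have pd: "(fst p, snd p \<otimes>\<^bsub>Z\<^esub> d) \<in> ext_carrier K Z" using p d by simp
    have qd: "(fst q, snd q \<otimes>\<^bsub>Z\<^esub> d) \<in> ext_carrier K Z" using qS d by simp
    have "f (fst q, snd q \<otimes>\<^bsub>Z\<^esub> d) = (fst p, snd p \<otimes>\<^bsub>Z\<^esub> d)" using Pf2[OF qS d] fq fst by simp
    then have "inv_into (ext_carrier K Z) f (fst p, snd p \<otimes>\<^bsub>Z\<^esub> d) = (fst q, snd q \<otimes>\<^bsub>Z\<^esub> d)"
      by (rule inv_into_f_eq[OF inj qd])
    then show "(\<lambda>z\<in>ext_carrier K Z. inv_into (ext_carrier K Z) f z) (fst p, snd p \<otimes>\<^bsub>Z\<^esub> d) =
        (fst p, snd ((\<lambda>z\<in>ext_carrier K Z. inv_into (ext_carrier K Z) f z) p) \<otimes>\<^bsub>Z\<^esub> d)"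
      using p pd fst unfolding q_def by simp
  qed
qed


lemma Lmap_eq:
  assumes th: "loop_cocycle K Z \<theta>" and mu: "group_cocycle K Z \<mu>"
    and x: "x \<in> ext_carrier K Z" and y: "y \<in> ext_carrier K Z"
  shows "Lmap (ext_carrier K Z) (ext_mult K Z (\<lambda>x y. \<mu> x y \<otimes>\<^bsub>Z\<^esub> \<theta> x y)) x y
       = Lmap (ext_carrier K Z) (ext_mult K Z \<theta>) x y"
  unfolding Lmap_def
  by (intro restrict_ext) (rule L_eq[OF th mu y x])

lemma inner_sub:
  assumes th: "loop_cocycle K Z \<theta>" and mu: "group_cocycle K Z \<mu>"
    and C: "is_commutative (ext_carrier K Z) (ext_mult K Z \<theta>)"
    and sym: "\<forall>x\<in>carrier K. \<forall>y\<in>carrier K. \<mu> x y = \<mu> y x"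
    and f: "f \<in> inner_maps (ext_carrier K Z) (ext_mult K Z (\<lambda>x y. \<mu> x y \<otimes>\<^bsub>Z\<^esub> \<theta> x y))"
  shows "f \<in> inner_maps (ext_carrier K Z) (ext_mult K Z \<theta>)"
  using f
proof (induction rule: inner_maps.induct)
  case (genL x y)
  then show ?case using Lmap_eq[OF th mu genL] inner_maps.genL by metis
next
  case (genR x y)
  have l0: "is_loop (ext_carrier K Z) (ext_mult K Z \<theta>) (ext_one K Z)" by (rule ext_loop[OF th])
  have l1: "is_loop (ext_carrier K Z) (ext_mult K Z (\<lambda>x y. \<mu> x y \<otimes>\<^bsub>Z\<^esub> \<theta> x y)) (ext_one K Z)"
    by (rule ext_loop[OF mu_theta_cocycle[OF th mu]])
  have C1: "is_commutative (ext_carrier K Z) (ext_mult K Z (\<lambda>x y. \<mu> x y \<otimes>\<^bsub>Z\<^esub> \<theta> x y))"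
    by (rule comm_new[OF C sym th])
  show ?case using comm_Rmap[OF l1 C1 genR] Lmap_eq[OF th mu genR] comm_Rmap[OF l0 C genR]
    inner_maps.genR[OF genR, of "ext_mult K Z \<theta>"] by simp
next
  case (genT x)
  have l1: "is_loop (ext_carrier K Z) (ext_mult K Z (\<lambda>x y. \<mu> x y \<otimes>\<^bsub>Z\<^esub> \<theta> x y)) (ext_one K Z)"
    by (rule ext_loop[OF mu_theta_cocycle[OF th mu]])
  have C1: "is_commutative (ext_carrier K Z) (ext_mult K Z (\<lambda>x y. \<mu> x y \<otimes>\<^bsub>Z\<^esub> \<theta> x y))"
    by (rule comm_new[OF C sym th])
  show ?case unfolding comm_Tmap[OF l1 C1 genT] by (rule inner_maps.ident)
next
  case ident
  then show ?case by (rule inner_maps.ident)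
next
  case (comp f g)
  show ?case by (rule inner_maps.comp[OF comp.IH])
next
  case (inv f)
  show ?case by (rule inner_maps.inv[OF inv.IH])
qed

lemma aut_new:
  assumes th: "loop_cocycle K Z \<theta>" and mu: "group_cocycle K Z \<mu>"
    and A: "is_A_loop (ext_carrier K Z) (ext_mult K Z \<theta>) (ext_one K Z)"
    and C: "is_commutative (ext_carrier K Z) (ext_mult K Z \<theta>)"
    and sym: "\<forall>x\<in>carrier K. \<forall>y\<in>carrier K. \<mu> x y = \<mu> y x"
    and f: "f \<in> inner_maps (ext_carrier K Z) (ext_mult K Z (\<lambda>x y. \<mu> x y \<otimes>\<^bsub>Z\<^esub> \<theta> x y))"
  shows "is_automorphism (ext_carrier K Z) (ext_mult K Z (\<lambda>x y. \<mu> x y \<otimes>\<^bsub>Z\<^esub> \<theta> x y)) f"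
proof -
  let ?S = "ext_carrier K Z" and ?m = "ext_mult K Z \<theta>" and ?m' = "ext_mult K Z (\<lambda>x y. \<mu> x y \<otimes>\<^bsub>Z\<^esub> \<theta> x y)"
  have f0: "f \<in> inner_maps ?S ?m" by (rule inner_sub[OF th mu C sym f])
  have aut: "\<forall>f\<in>inner_maps ?S ?m. is_automorphism ?S ?m f"
    using A unfolding is_A_loop_def by (elim conjE)
  have bh: "bij_betw f ?S ?S \<and> (\<forall>x\<in>?S. \<forall>y\<in>?S. f (?m x y) = ?m (f x) (f y))"
    using aut[rule_format, OF f0] unfolding is_automorphism_def .
  have bij: "bij_betw f ?S ?S" using bh by (rule conjunct1)
  have hom: "\<forall>x\<in>?S. \<forall>y\<in>?S. f (?m x y) = ?m (f x) (f y)" using bh by (rule conjunct2)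
  have P: "Pform f" by (rule P_inner[OF th A C f0])
  have Pf1: "\<And>p. p \<in> ?S \<Longrightarrow> f p \<in> ?S \<and> fst (f p) = fst p"
    and Pf2: "\<And>p d. p \<in> ?S \<Longrightarrow> d \<in> carrier Z \<Longrightarrow> f (fst p, snd p \<otimes>\<^bsub>Z\<^esub> d) = (fst p, snd (f p) \<otimes>\<^bsub>Z\<^esub> d)"
    using P unfolding Pform_def by (simp_all only: Ball_def)
  have thc: "\<And>x y. x \<in> carrier K \<Longrightarrow> y \<in> carrier K \<Longrightarrow> \<theta> x y \<in> carrier Z"
    using th unfolding loop_cocycle_def by auto
  have muc: "\<And>x y. x \<in> carrier K \<Longrightarrow> y \<in> carrier K \<Longrightarrow> \<mu> x y \<in> carrier Z"
    using mu unfolding loop_cocycle_def group_cocycle_def by auto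
  have split: "?m' p q = (fst (?m p q), snd (?m p q) \<otimes>\<^bsub>Z\<^esub> \<mu> (fst p) (fst q))"
    if "p \<in> ?S" "q \<in> ?S" for p q
    using that thc muc by (simp add: ext_mult_def Z.m_ac)
  have "f (?m' p q) = ?m' (f p) (f q)" if p: "p \<in> ?S" and q: "q \<in> ?S" for p q
  proof -
    have pq: "?m p q \<in> ?S" using p q thc by (simp add: ext_mult_def)
    have mc: "\<mu> (fst p) (fst q) \<in> carrier Z" using p q muc by simp
    have "f (?m' p q) = (fst (?m p q), snd (f (?m p q)) \<otimes>\<^bsub>Z\<^esub> \<mu> (fst p) (fst q))"
      using split[OF p q] Pf2[OF pq mc] by simp
    also have "\<dots> = (fst (?m (f p) (f q)), snd (?m (f p) (f q)) \<otimes>\<^bsub>Z\<^esub> \<mu> (fst (f p)) (fst (f q)))"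
      using hom p q Pf1[OF p] Pf1[OF q] by (simp add: ext_mult_def)
    also have "\<dots> = ?m' (f p) (f q)"
      using split[OF conjunct1[OF Pf1[OF p]] conjunct1[OF Pf1[OF q]]] Pf1[OF p] Pf1[OF q] by simp
    finally show ?thesis .
  qed
  then show ?thesis unfolding is_automorphism_def using bij by blast
qed

end

theorem lemma4p11:
  fixes K :: "('k, 'c) monoid_scheme" and Z :: "('z, 'd) monoid_scheme"
    and \<theta> \<mu> :: "'k \<Rightarrow> 'k \<Rightarrow> 'z"
  assumes "group K" and "comm_group Z"
    and "loop_cocycle K Z \<theta>"
    and "is_A_loop (ext_carrier K Z) (ext_mult K Z \<theta>) (ext_one K Z)"
    and "is_commutative (ext_carrier K Z) (ext_mult K Z \<theta>)"
    and "group_cocycle K Z \<mu>"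
    and "\<forall>x\<in>carrier K. \<forall>y\<in>carrier K. \<mu> x y = \<mu> y x"
  shows "is_A_loop (ext_carrier K Z) (ext_mult K Z (\<lambda>x y. \<mu> x y \<otimes>\<^bsub>Z\<^esub> \<theta> x y)) (ext_one K Z)
       \<and> is_commutative (ext_carrier K Z) (ext_mult K Z (\<lambda>x y. \<mu> x y \<otimes>\<^bsub>Z\<^esub> \<theta> x y))
       \<and> (\<forall>u\<in>ext_carrier K Z. \<forall>v\<in>ext_carrier K Z. \<forall>w\<in>ext_carrier K Z.
            (let S = ext_carrier K Z; m = ext_mult K Z (\<lambda>x y. \<mu> x y \<otimes>\<^bsub>Z\<^esub> \<theta> x y);
                 m0 = ext_mult K Z \<theta>
             in ldiv S m (m u v) (m u (m v w)) = ldiv S m0 (m0 u v) (m0 u (m0 v w))))"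
proof -
  interpret E: ext_ctx K Z using assms(1,2) by (simp add: ext_ctx_def)
  have l1: "is_loop (ext_carrier K Z) (ext_mult K Z (\<lambda>x y. \<mu> x y \<otimes>\<^bsub>Z\<^esub> \<theta> x y)) (ext_one K Z)"
    by (rule E.ext_loop[OF E.mu_theta_cocycle[OF assms(3,6)]])
  have A: "is_A_loop (ext_carrier K Z) (ext_mult K Z (\<lambda>x y. \<mu> x y \<otimes>\<^bsub>Z\<^esub> \<theta> x y)) (ext_one K Z)"
    unfolding is_A_loop_def using l1 E.aut_new[OF assms(3,6,4,5,7)] by (intro conjI ballI) simp_all
  have C: "is_commutative (ext_carrier K Z) (ext_mult K Z (\<lambda>x y. \<mu> x y \<otimes>\<^bsub>Z\<^esub> \<theta> x y))"
    by (rule E.comm_new[OF assms(5,7,3)])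
  show ?thesis using A C E.L_eq[OF assms(3,6)] by (simp add: Let_def)
qed

end
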